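(* For every $\varepsilon>0$ there exists $n_0$ such that every graph $G$ on $n\ge n_0$ vertices that contains no clique of size $\frac12\log_2 n$ satisfies $\chi_\ell(G)\le(2+\varepsilon)\,n/\log_2 n$. Equivalently, $R_{\chi_\ell}(k,\underline{k})\le 2^{(2+o(1))k}$ as $k\to\infty$.
   Context: $\chi_\ell(G)$ is the list chromatic number: the least $k$ such that for every assignment of lists $L(v)\subset\mathbb Z^+$ with $|L(v)|=k$ there is a proper colouring $c$ with $c(v)\in L(v)$ for all $v$. For positive integers $k,\ell$, the list chromatic Ramsey number $R_{\chi_\ell}(k,\underline{\ell})$ is the least $n$ such that every $K_k$-free graph $G$ on $n$ vertices satisfies $\chi_\ell(G)<n/\ell$. *)

theory Defs
  imports Complex_Main
begin

definition simple_graph :: "nat set \<Rightarrow> (nat \<Rightarrow> nat \<Rightarrow> bool) \<Rightarrow> bool" where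
  "simple_graph V E \<longleftrightarrow> finite V \<and>
     (\<forall>u v. E u v \<longrightarrow> u \<in> V \<and> v \<in> V \<and> u \<noteq> v \<and> E v u)"

definition is_clique :: "nat set \<Rightarrow> (nat \<Rightarrow> nat \<Rightarrow> bool) \<Rightarrow> nat set \<Rightarrow> bool" where
  "is_clique V E K \<longleftrightarrow> K \<subseteq> V \<and> (\<forall>u\<in>K. \<forall>v\<in>K. u \<noteq> v \<longrightarrow> E u v)"

definition choosable :: "nat set \<Rightarrow> (nat \<Rightarrow> nat \<Rightarrow> bool) \<Rightarrow> nat \<Rightarrow> bool" where
  "choosable V E k \<longleftrightarrow>
     (\<forall>L :: nat \<Rightarrow> nat set. (\<forall>v\<in>V. L v \<subseteq> {0<..} \<and> finite (L v) \<and> card (L v) = k) \<longrightarrow>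
        (\<exists>c :: nat \<Rightarrow> nat. (\<forall>v\<in>V. c v \<in> L v) \<and>
           (\<forall>u\<in>V. \<forall>v\<in>V. E u v \<longrightarrow> c u \<noteq> c v)))"

definition list_chromatic_number :: "nat set \<Rightarrow> (nat \<Rightarrow> nat \<Rightarrow> bool) \<Rightarrow> nat" where
  "list_chromatic_number V E = (LEAST k. choosable V E k)"

end

theory Submission imports Defs "HOL-Real_Asymp.Real_Asymp" begin

lemma hall:
  fixes A :: "'a \<Rightarrow> 'b set"
  assumes "finite U" "\<forall>v\<in>U. finite (A v)" "\<forall>X\<subseteq>U. card X \<le> card (\<Union>(A ` X))"
  shows "\<exists>f. inj_on f U \<and> (\<forall>v\<in>U. f v \<in> A v)"
  using assms
proof (induction "card U" arbitrary: U A rule: less_induct)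
  case less
  show ?case
  proof (cases "U = {}")
    case True thus ?thesis by auto
  next
    case False
    show ?thesis
    proof (cases "\<exists>X. X \<subseteq> U \<and> X \<noteq> {} \<and> X \<noteq> U \<and> card (\<Union>(A`X)) = card X")
      case True
      then obtain X where X: "X \<subseteq> U" "X \<noteq> {}" "X \<noteq> U" "card (\<Union>(A`X)) = card X" by blast
      have fX: "finite X" using X less.prems finite_subset by blast
      have cX: "card X < card U" using X less.prems psubset_card_mono by blast
      have hX1: "\<forall>v\<in>X. finite (A v)" using X less.prems by blast
      have hX2: "\<forall>Y\<subseteq>X. card Y \<le> card (\<Union>(A ` Y))" using X less.prems by blast
      obtain f1 where f1: "inj_on f1 X" "\<forall>v\<in>X. f1 v \<in> A v"
        using less.hyps[OF cX fX hX1 hX2] by blast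
      define B where "B = (\<lambda>v. A v - \<Union>(A`X))"
      have cR: "card (U - X) < card U" using X less.prems by (intro psubset_card_mono) auto
      have finA: "finite (\<Union>(A`Y))" if "Y \<subseteq> U" for Y
        using that less.prems by (meson finite_UN_I finite_subset subsetD)
      have hallR: "\<forall>Y\<subseteq>U - X. card Y \<le> card (\<Union>(B`Y))"
      proof (intro allI impI)
        fix Y assume Y: "Y \<subseteq> U - X"
        have eq: "\<Union>(B`Y) = \<Union>(A`(X \<union> Y)) - \<Union>(A`X)" by (auto simp: B_def)
        have sub: "\<Union>(A`X) \<subseteq> \<Union>(A`(X \<union> Y))" by auto
        have XY: "X \<union> Y \<subseteq> U" using X Y by auto
        have c1: "card (\<Union>(B`Y)) = card (\<Union>(A`(X \<union> Y))) - card (\<Union>(A`X))"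
          unfolding eq using sub finA[OF XY] by (meson card_Diff_subset finite_subset)
        have c2: "card (X \<union> Y) \<le> card (\<Union>(A`(X \<union> Y)))" using less.prems XY by blast
        have fY: "finite Y" using Y less.prems finite_subset by blast
        have c3: "card (X \<union> Y) = card X + card Y" using Y fX fY by (subst card_Un_disjoint) auto
        show "card Y \<le> card (\<Union>(B`Y))" using c1 c2 c3 X(4) by linarith
      qed
      obtain f2 where f2: "inj_on f2 (U - X)" "\<forall>v\<in>U - X. f2 v \<in> B v"
        using less.hyps[OF cR, of B] hallR less.prems by (auto simp: B_def)
      define f where "f = (\<lambda>v. if v \<in> X then f1 v else f2 v)"
      have "inj_on f U"
        unfolding inj_on_def
      proof (intro ballI impI)
        fix u v assume uv: "u \<in> U" "v \<in> U" "f u = f v"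
        show "u = v"
        proof (cases "u \<in> X"; cases "v \<in> X")
          assume "u \<in> X" "v \<in> X" thus ?thesis using uv f1 by (auto simp: f_def inj_on_def)
        next
          assume a: "u \<in> X" "v \<notin> X"
          hence "f1 u \<in> \<Union>(A`X)" "f2 v \<notin> \<Union>(A`X)" using f1 f2 uv by (auto simp: B_def)
          thus ?thesis using uv a by (auto simp: f_def)
        next
          assume a: "u \<notin> X" "v \<in> X"
          hence "f1 v \<in> \<Union>(A`X)" "f2 u \<notin> \<Union>(A`X)" using f1 f2 uv by (auto simp: B_def)
          thus ?thesis using uv a by (auto simp: f_def)
        next
          assume "u \<notin> X" "v \<notin> X" thus ?thesis using uv f2 by (auto simp: f_def inj_on_def)
        qed
      qed
      moreover have "\<forall>v\<in>U. f v \<in> A v" using f1 f2 by (auto simp: f_def B_def)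
      ultimately show ?thesis by blast
    next
      case False2: False
      obtain v where v: "v \<in> U" using False by blast
      have "card {v} \<le> card (\<Union>(A`{v}))" using less.prems v by blast
      hence "card {v} \<le> card (A v)" by simp
      hence "A v \<noteq> {}" by auto
      then obtain a where a: "a \<in> A v" by blast
      define B where "B = (\<lambda>w. A w - {a})"
      have cR: "card (U - {v}) < card U" using v less.prems by (meson card_Diff1_less)
      have hallR: "\<forall>Y\<subseteq>U - {v}. card Y \<le> card (\<Union>(B`Y))"
      proof (intro allI impI)
        fix Y assume Y: "Y \<subseteq> U - {v}"
        show "card Y \<le> card (\<Union>(B`Y))"
        proof (cases "Y = {}")
          case True thus ?thesis by simp
        next
          case False
          have "Y \<noteq> U" using Y v by auto
          hence ne: "card (\<Union>(A`Y)) \<noteq> card Y" using False2 False Y by blast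
          have "card Y \<le> card (\<Union>(A`Y))" using less.prems Y by blast
          moreover have "\<Union>(B`Y) = \<Union>(A`Y) - {a}" by (auto simp: B_def)
          moreover have "finite (\<Union>(A`Y))" using Y less.prems
            by (meson Diff_subset finite_UN_I finite_subset subsetD)
          ultimately show ?thesis using ne by (simp add: card_Diff_singleton_if) linarith
        qed
      qed
      obtain f2 where f2: "inj_on f2 (U - {v})" "\<forall>w\<in>U - {v}. f2 w \<in> B w"
        using less.hyps[OF cR, of B] hallR less.prems by (auto simp: B_def)
      define f where "f = f2(v := a)"
      have "inj_on f U" unfolding inj_on_def f_def
      proof (intro ballI impI)
        fix x y assume xy: "x \<in> U" "y \<in> U" "(f2(v:=a)) x = (f2(v:=a)) y"
        then show "x = y" using f2 by (cases "x = v"; cases "y = v") (auto simp: B_def inj_on_def)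
      qed
      moreover have "\<forall>w\<in>U. f w \<in> A w" using f2 a by (auto simp: f_def B_def)
      ultimately show ?thesis by blast
    qed
  qed
qed


lemma sdr_degree:
  fixes A :: "'a \<Rightarrow> 'b set"
  assumes fU: "finite U" and m: "m \<ge> 1" and lists: "\<forall>v\<in>U. finite (A v) \<and> m \<le> card (A v)"
    and deg: "\<forall>c. card {v\<in>U. c \<in> A v} \<le> m"
  shows "\<exists>f. inj_on f U \<and> (\<forall>v\<in>U. f v \<in> A v)"
proof (rule hall[OF fU])
  show "\<forall>v\<in>U. finite (A v)" using lists by blast
  show "\<forall>X\<subseteq>U. card X \<le> card (\<Union>(A ` X))"
  proof (intro allI impI)
    fix X assume X: "X \<subseteq> U"
    define C where "C = \<Union>(A ` X)"
    have fX: "finite X" using X fU finite_subset by blast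
    have fC: "finite C" unfolding C_def using fX X lists by blast
    have "m * card X = (\<Sum>v\<in>X. m)" by simp
    also have "\<dots> \<le> (\<Sum>v\<in>X. card (A v))" using X lists by (intro sum_mono) auto
    also have "\<dots> = (\<Sum>v\<in>X. \<Sum>c\<in>C. if c \<in> A v then 1 else 0)"
    proof (rule sum.cong[OF refl])
      fix v assume v: "v \<in> X"
      have "A v \<subseteq> C" using v by (auto simp: C_def)
      hence "C \<inter> {c. c \<in> A v} = A v" by auto
      thus "card (A v) = (\<Sum>c\<in>C. if c \<in> A v then 1 else 0)"
        using sum.inter_filter[OF fC, of "\<lambda>_. (1::nat)" "\<lambda>c. c \<in> A v"]
        by (simp add: Int_def Collect_conj_eq[symmetric] conj_commute)
    qed
    also have "\<dots> = (\<Sum>c\<in>C. \<Sum>v\<in>X. if c \<in> A v then 1 else 0)" by (rule sum.swap)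
    also have "\<dots> = (\<Sum>c\<in>C. card {v\<in>X. c \<in> A v})"
      using fX by (intro sum.cong refl) (simp add: sum.If_cases Int_def conj_commute)
    also have "\<dots> \<le> (\<Sum>c\<in>C. m)"
    proof (intro sum_mono)
      fix c
      have "card {v\<in>X. c \<in> A v} \<le> card {v\<in>U. c \<in> A v}"
        using X fU by (intro card_mono) auto
      thus "card {v\<in>X. c \<in> A v} \<le> m" using deg by (meson order_trans)
    qed
    also have "\<dots> = m * card C" by simp
    finally have "m * card X \<le> m * card C" .
    thus "card X \<le> card (\<Union>(A ` X))" using m by (simp add: C_def)
  qed
qed

lemma ramsey2:
  assumes sg: "simple_graph V E"
  shows "S \<subseteq> V \<Longrightarrow> 2^(k+t) \<le> card S \<Longrightarrow>
    (\<exists>K\<subseteq>S. card K = k \<and> is_clique V E K) \<or> (\<exists>I\<subseteq>S. card I = t \<and> (\<forall>u\<in>I. \<forall>v\<in>I. \<not> E u v))"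
proof (induction "k+t" arbitrary: k t S rule: less_induct)
  case less
  have fS: "finite S" using less.prems sg finite_subset unfolding simple_graph_def by blast
  show ?case
  proof (cases "k = 0 \<or> t = 0")
    case True
    thus ?thesis unfolding is_clique_def by (metis card.empty empty_iff empty_subsetI)
  next
    case False
    then obtain k' t' where kt: "k = Suc k'" "t = Suc t'" by (meson not0_implies_Suc)
    have "card S \<ge> 1" using less.prems(2) by (metis le_trans one_le_numeral one_le_power)
    then obtain v where v: "v \<in> S" by fastforce
    define N where "N = {u\<in>S - {v}. E v u}"
    define M where "M = {u\<in>S - {v}. \<not> E v u}"
    have NM: "N \<union> M = S - {v}" "N \<inter> M = {}" by (auto simp: N_def M_def)
    have cNM: "card N + card M = card S - 1"
      using fS v NM by (metis card_Diff_singleton card_Un_disjoint finite_Diff finite_Un)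
    have pow: "(2::nat)^(k+t) = 2 * 2^(k'+t) \<and> (2::nat)^(k+t) = 2 * 2^(k+t')" using kt by simp
    have "card N \<ge> 2^(k'+t) \<or> card M \<ge> 2^(k+t')"
    proof (rule ccontr)
      assume "\<not> ?thesis"
      hence "card N + card M \<le> 2^(k'+t) - 1 + (2^(k+t') - 1)" by linarith
      moreover have "(2::nat)^(k'+t) \<ge> 1" "(2::nat)^(k+t') \<ge> 1" by simp_all
      ultimately show False using cNM pow less.prems(2) by linarith
    qed
    thus ?thesis
    proof
      assume cN: "card N \<ge> 2^(k'+t)"
      have "k'+t < k+t" using kt by simp
      from less.hyps[OF this, of N] cN less.prems(1) have
        "(\<exists>K\<subseteq>N. card K = k' \<and> is_clique V E K) \<or> (\<exists>I\<subseteq>N. card I = t \<and> (\<forall>u\<in>I. \<forall>v\<in>I. \<not> E u v))"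
        by (auto simp: N_def)
      thus ?thesis
      proof
        assume "\<exists>K\<subseteq>N. card K = k' \<and> is_clique V E K"
        then obtain K where K: "K \<subseteq> N" "card K = k'" "is_clique V E K" by blast
        have "K \<subseteq> S" using K(1) by (auto simp: N_def)
        hence fK: "finite K" using fS by (rule finite_subset)
        have vK: "v \<notin> K" using K by (auto simp: N_def)
        have "insert v K \<subseteq> S" using K v by (auto simp: N_def)
        moreover have "card (insert v K) = k" using fK vK K kt by simp
        moreover have "is_clique V E (insert v K)"
          using K v less.prems(1) sg unfolding is_clique_def simple_graph_def N_def by blast
        ultimately show ?thesis by blast
      next
        assume "\<exists>I\<subseteq>N. card I = t \<and> (\<forall>u\<in>I. \<forall>v\<in>I. \<not> E u v)"
        thus ?thesis by (auto simp: N_def)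
      qed
    next
      assume cM: "card M \<ge> 2^(k+t')"
      have "k+t' < k+t" using kt by simp
      from less.hyps[OF this, of M] cM less.prems(1) have
        "(\<exists>K\<subseteq>M. card K = k \<and> is_clique V E K) \<or> (\<exists>I\<subseteq>M. card I = t' \<and> (\<forall>u\<in>I. \<forall>v\<in>I. \<not> E u v))"
        by (auto simp: M_def)
      thus ?thesis
      proof
        assume "\<exists>K\<subseteq>M. card K = k \<and> is_clique V E K"
        thus ?thesis by (auto simp: M_def)
      next
        assume "\<exists>I\<subseteq>M. card I = t' \<and> (\<forall>u\<in>I. \<forall>v\<in>I. \<not> E u v)"
        then obtain I where I: "I \<subseteq> M" "card I = t'" "\<forall>u\<in>I. \<forall>v\<in>I. \<not> E u v" by blast
        have "I \<subseteq> S" using I(1) by (auto simp: M_def)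
        hence fI: "finite I" using fS by (rule finite_subset)
        have vI: "v \<notin> I" using I by (auto simp: M_def)
        have "insert v I \<subseteq> S" using I v by (auto simp: M_def)
        moreover have "card (insert v I) = t" using fI vI I kt by simp
        moreover have "\<forall>u\<in>insert v I. \<forall>w\<in>insert v I. \<not> E u w"
          using I sg unfolding simple_graph_def M_def by blast
        ultimately show ?thesis by blast
      qed
    qed
  qed
qed


lemma colour_main:
  assumes sg: "simple_graph V E" and t: "t \<ge> 1" and m: "m \<ge> 1"
    and indep: "\<forall>S\<subseteq>V. m \<le> card S \<longrightarrow> (\<exists>I\<subseteq>S. card I = t \<and> (\<forall>u\<in>I. \<forall>v\<in>I. \<not> E u v))"
  shows "U \<subseteq> V \<Longrightarrow> (\<forall>v\<in>U. finite (L v) \<and> m + card U div t \<le> card (L v)) \<Longrightarrow>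
    \<exists>c::nat\<Rightarrow>nat. (\<forall>v\<in>U. c v \<in> L v) \<and> (\<forall>u\<in>U. \<forall>v\<in>U. E u v \<longrightarrow> c u \<noteq> c v)"
proof (induction "card U" arbitrary: U L rule: less_induct)
  case less
  have fU: "finite U" using less.prems sg finite_subset unfolding simple_graph_def by blast
  show ?case
  proof (cases "\<exists>c. m \<le> card {v\<in>U. c \<in> L v}")
    case True
    then obtain c where c: "m \<le> card {v\<in>U. c \<in> L v}" by blast
    have "{v\<in>U. c \<in> L v} \<subseteq> V" using less.prems by auto
    then obtain I where I: "I \<subseteq> {v\<in>U. c \<in> L v}" "card I = t" "\<forall>u\<in>I. \<forall>v\<in>I. \<not> E u v"
      using indep c by blast
    have IU: "I \<subseteq> U" using I by auto
    have fI: "finite I" using IU fU finite_subset by blast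
    have cU': "card (U - I) = card U - t" using I IU fI by (simp add: card_Diff_subset)
    have tU: "t \<le> card U" using I(2) IU fU card_mono by blast
    have lt: "card (U - I) < card U" using cU' tU t by linarith
    have divs: "card (U - I) div t + 1 = card U div t"
    proof -
      obtain r where r: "card U = r + t" using tU le_Suc_ex by (metis add.commute)
      have "card U div t = r div t + 1" using r t by simp
      thus ?thesis using cU' r by simp
    qed
    define L' where "L' = (\<lambda>v. L v - {c})"
    have inv: "\<forall>v\<in>U - I. finite (L' v) \<and> m + card (U - I) div t \<le> card (L' v)"
    proof
      fix v assume v: "v \<in> U - I"
      have "finite (L v)" "m + card U div t \<le> card (L v)" using less.prems v by auto
      moreover have "card (L' v) \<ge> card (L v) - 1" unfolding L'_def
        by (simp add: card_Diff_singleton_if)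
      ultimately show "finite (L' v) \<and> m + card (U - I) div t \<le> card (L' v)"
        using divs unfolding L'_def by auto
    qed
    obtain c' :: "nat \<Rightarrow> nat" where c': "\<forall>v\<in>U - I. c' v \<in> L' v" "\<forall>u\<in>U - I. \<forall>v\<in>U - I. E u v \<longrightarrow> c' u \<noteq> c' v"
      using less.hyps[OF lt, of L'] less.prems(1) inv by blast
    define col where "col = (\<lambda>v. if v \<in> I then c else c' v)"
    have "\<forall>v\<in>U. col v \<in> L v" using c' I by (auto simp: col_def L'_def)
    moreover have "\<forall>u\<in>U. \<forall>v\<in>U. E u v \<longrightarrow> col u \<noteq> col v"
      using c' I(3) by (auto simp: col_def L'_def)
    ultimately show ?thesis by blast
  next
    case False
    hence deg: "\<forall>c. card {v\<in>U. c \<in> L v} \<le> m" by (meson nat_le_linear order_trans not_le le_refl) 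
    have lists: "\<forall>v\<in>U. finite (L v) \<and> m \<le> card (L v)" using less.prems by fastforce
    obtain f where f: "inj_on f U" "\<forall>v\<in>U. f v \<in> L v" using sdr_degree[OF fU m lists deg] by blast
    have "\<forall>u\<in>U. \<forall>v\<in>U. E u v \<longrightarrow> f u \<noteq> f v"
      using f(1) sg unfolding simple_graph_def inj_on_def by metis
    thus ?thesis using f by blast
  qed
qed

lemma lcn_bound:
  assumes sg: "simple_graph V E" and t: "t \<ge> 1" and m: "m \<ge> 1"
    and indep: "\<forall>S\<subseteq>V. m \<le> card S \<longrightarrow> (\<exists>I\<subseteq>S. card I = t \<and> (\<forall>u\<in>I. \<forall>v\<in>I. \<not> E u v))"
  shows "list_chromatic_number V E \<le> card V div t + m"
proof -
  have "choosable V E (card V div t + m)"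
    unfolding choosable_def
  proof (intro allI impI)
    fix L :: "nat \<Rightarrow> nat set"
    assume "\<forall>v\<in>V. L v \<subseteq> {0<..} \<and> finite (L v) \<and> card (L v) = card V div t + m"
    hence "\<forall>v\<in>V. finite (L v) \<and> m + card V div t \<le> card (L v)" by auto
    thus "\<exists>c. (\<forall>v\<in>V. c v \<in> L v) \<and> (\<forall>u\<in>V. \<forall>v\<in>V. E u v \<longrightarrow> c u \<noteq> c v)"
      using colour_main[OF sg t m indep, of V L] by blast
  qed
  thus ?thesis unfolding list_chromatic_number_def by (rule Least_le)
qed


theorem mainTheorem18:
  fixes \<epsilon> :: real
  assumes "\<epsilon> > 0"
  shows "\<exists>n0::nat. \<forall>V E. simple_graph V E \<longrightarrow> card V \<ge> n0 \<longrightarrow>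
     (\<forall>K. is_clique V E K \<longrightarrow> real (card K) < log 2 (real (card V)) / 2) \<longrightarrow>
     real (list_chromatic_number V E) \<le> (2 + \<epsilon>) * real (card V) / log 2 (real (card V))"
proof -
  define a where "a = 2 + \<epsilon>/2"
  define c where "c = 1/2 - 1/a"
  have a: "a > 2" using assms by (simp add: a_def)
  have c: "c > 0" using a by (simp add: c_def field_simps)
  have lim1: "((\<lambda>x. x / (x/a - 1)) \<longlongrightarrow> a) at_top" using a by real_asymp
  have lim2: "((\<lambda>x. x * 2 powr (-c*x)) \<longlongrightarrow> 0) at_top" using c by real_asymp
  have "eventually (\<lambda>x. x / (x/a - 1) < 2 + 3*\<epsilon>/4) at_top"
    using order_tendstoD(2)[OF lim1] assms by (simp add: a_def)
  then obtain X1 where X1: "\<And>x. x \<ge> X1 \<Longrightarrow> x / (x/a - 1) < 2 + 3*\<epsilon>/4"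
    by (auto simp: eventually_at_top_linorder)
  have "eventually (\<lambda>x. x * 2 powr (-c*x) < \<epsilon>/16) at_top"
    by (rule order_tendstoD(2)[OF lim2]) (use assms in simp)
  then obtain X2 where X2: "\<And>x. x \<ge> X2 \<Longrightarrow> x * 2 powr (-c*x) < \<epsilon>/16"
    by (auto simp: eventually_at_top_linorder)
  define M where "M = max (max X1 X2) (a + 1)"
  define n0 where "n0 = nat \<lceil>2 powr M\<rceil>"
  show ?thesis
  proof (intro exI allI impI)
    fix V E
    assume sg: "simple_graph V E" and n0: "n0 \<le> card V"
      and ncl: "\<forall>K. is_clique V E K \<longrightarrow> real (card K) < log 2 (real (card V)) / 2"
    define n where "n = card V"
    define L where "L = log 2 (real n)"
    have "2 powr M \<le> real n0" unfolding n0_def by linarith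
    hence nM: "2 powr M \<le> real n" using n0 unfolding n_def by linarith
    have npos: "real n > 0" using nM by (smt (verit) powr_gt_zero)
    have LM: "L \<ge> M" unfolding L_def using nM
      by (metis le_log_iff less_eq_real_def log_powr_cancel powr_gt_zero one_less_numeral_iff semiring_norm(76) npos)
    have La: "L \<ge> a + 1" "L \<ge> X1" "L \<ge> X2" using LM by (auto simp: M_def)
    have nL: "2 powr L = real n" unfolding L_def using npos by simp
    define k where "k = nat \<lceil>L/2\<rceil>"
    define t where "t = nat \<lfloor>L/a\<rfloor>"
    have k1: "real k \<ge> L/2" "real k \<le> L/2 + 1" using a La unfolding k_def
      by (simp_all add: ceiling_le_iff ceiling_correct)
    have t1: "real t \<le> L/a" "real t \<ge> L/a - 1" using a La unfolding t_def
      by (simp_all)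
    have La1: "L/a - 1 \<ge> 1/a" using a La by (simp add: field_simps)
    have tpos: "real t > 0" using t1 La1 a by (smt (verit) divide_pos_pos)
    hence t: "t \<ge> 1" by simp
    define m where "m = (2::nat)^(k+t)"
    have m: "m \<ge> 1" by (simp add: m_def)
    have indep: "\<forall>S\<subseteq>V. m \<le> card S \<longrightarrow> (\<exists>I\<subseteq>S. card I = t \<and> (\<forall>u\<in>I. \<forall>v\<in>I. \<not> E u v))"
    proof (intro allI impI)
      fix S assume S: "S \<subseteq> V" "m \<le> card S"
      from ramsey2[OF sg S(1)] S(2) have
        "(\<exists>K\<subseteq>S. card K = k \<and> is_clique V E K) \<or> (\<exists>I\<subseteq>S. card I = t \<and> (\<forall>u\<in>I. \<forall>v\<in>I. \<not> E u v))"
        by (simp add: m_def)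
      moreover have "\<not> (\<exists>K\<subseteq>S. card K = k \<and> is_clique V E K)"
        using ncl k1 unfolding L_def n_def by fastforce
      ultimately show "\<exists>I\<subseteq>S. card I = t \<and> (\<forall>u\<in>I. \<forall>v\<in>I. \<not> E u v)" by blast
    qed
    have lcn: "list_chromatic_number V E \<le> n div t + m"
      using lcn_bound[OF sg t m indep] by (simp add: n_def)
    have b1: "real (n div t) \<le> real n / (L/a - 1)"
    proof -
      have "real (n div t) \<le> real n / real t" by (rule of_nat_div_le_of_nat)
      also have "\<dots> \<le> real n / (L/a - 1)"
      proof (rule divide_left_mono)
        have "L/a - 1 > 0" using La1 a by (smt (verit) divide_pos_pos)
        thus "0 < real t * (L / a - 1)" using tpos by simp
      qed (use t1 npos in auto)
      finally show ?thesis .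
    qed
    have b2: "real m \<le> 2 * real n * 2 powr (-c*L)"
    proof -
      have "real m = 2 powr real (k+t)" unfolding m_def by (subst powr_realpow) auto
      also have "\<dots> \<le> 2 powr (1 + L + (-c*L))"
      proof (intro powr_mono)
        have "1 + L + (-c*L) = L/2 + 1 + L/a" by (simp add: c_def algebra_simps)
        thus "real (k+t) \<le> 1 + L + (-c*L)" using k1 t1 by simp
      qed simp
      also have "\<dots> = 2 powr 1 * 2 powr L * 2 powr (-c*L)" by (simp only: powr_add[symmetric])
      also have "\<dots> = 2 * real n * 2 powr (-c*L)" by (simp add: nL)
      finally show ?thesis .
    qed
    have Lpos: "L > 0" using La a by linarith
    have e1: "L / (L/a - 1) < 2 + 3*\<epsilon>/4" using X1 La by blast
    have e2: "L * 2 powr (-c*L) < \<epsilon>/16" using X2 La by blast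
    have "real (list_chromatic_number V E) \<le> real n / (L/a - 1) + 2 * real n * 2 powr (-c*L)"
      using lcn b1 b2 by (smt (verit) of_nat_add of_nat_mono)
    also have "\<dots> = (real n / L) * (L / (L/a - 1) + 2 * (L * 2 powr (-c*L)))"
      using Lpos by (simp add: field_simps)
    also have "\<dots> \<le> (real n / L) * (2 + \<epsilon>)"
    proof (intro mult_left_mono)
      show "L / (L/a - 1) + 2 * (L * 2 powr (-c*L)) \<le> 2 + \<epsilon>" using e1 e2 assms by linarith
    qed (use npos Lpos in simp)
    finally show "real (list_chromatic_number V E) \<le> (2 + \<epsilon>) * real (card V) / log 2 (real (card V))"
      by (simp add: n_def L_def mult.commute)
  qed
qed

end
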